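(* Let $\mathcal{C}$ be a covering of a finite set $E$. If $XH$ induced by $\mathcal{C}$ is the closure operator of a matroid on $E$, then $VH$ induced by $\mathcal{C}$ is also the closure operator of a matroid on $E$; moreover $\mathcal{I}_{XH}(\mathcal{C})=\mathcal{I}_{VH}(\mathcal{C})$ and $\mathcal{L}_{XH}(M(\mathcal{C}))=\mathcal{L}_{VH}(M(\mathcal{C}))$.
   Context: A covering of $E$ is a family of nonempty subsets of $E$ with union $E$. $N(x)=\bigcap\{K\in\mathcal{C}:x\in K\}$; $XH(X)=\{x:N(x)\cap X\neq\emptyset\}$; $VH(X)=\bigcup\{N(x):N(x)\cap X\neq\emptyset\}$. When $H\in\{XH,VH\}$ is the closure operator of a matroid (closure $cl(X)=\{a:r(X\cup\{a\})=r(X)\}$), $\mathcal{I}_H(\mathcal{C})=\{I\subseteq E:x\notin H(I-\{x\})\ \forall x\in I\}$ is its family of independent sets and $\mathcal{L}_H(M(\mathcal{C}))=\{X:H(X)=X\}$ its set of closed sets. *)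

theory Defs
  imports Main
begin

definition covering :: "'a set \<Rightarrow> 'a set set \<Rightarrow> bool" where
  "covering E C \<longleftrightarrow> (\<forall>K\<in>C. K \<subseteq> E \<and> K \<noteq> {}) \<and> \<Union>C = E"

definition nbhd :: "'a set set \<Rightarrow> 'a \<Rightarrow> 'a set" where
  "nbhd C x = \<Inter>{K\<in>C. x \<in> K}"

definition XH :: "'a set \<Rightarrow> 'a set set \<Rightarrow> 'a set \<Rightarrow> 'a set" where
  "XH E C X = {x\<in>E. nbhd C x \<inter> X \<noteq> {}}"

definition VH :: "'a set \<Rightarrow> 'a set set \<Rightarrow> 'a set \<Rightarrow> 'a set" where
  "VH E C X = \<Union>{nbhd C x | x. x \<in> E \<and> nbhd C x \<inter> X \<noteq> {}}"

definition matroid :: "'a set \<Rightarrow> 'a set set \<Rightarrow> bool" where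
  "matroid E \<I> \<longleftrightarrow> finite E \<and> \<I> \<subseteq> Pow E \<and> {} \<in> \<I>
     \<and> (\<forall>I J. J \<in> \<I> \<and> I \<subseteq> J \<longrightarrow> I \<in> \<I>)
     \<and> (\<forall>I J. I \<in> \<I> \<and> J \<in> \<I> \<and> card I < card J \<longrightarrow>
           (\<exists>e\<in>J - I. insert e I \<in> \<I>))"

definition mrank :: "'a set set \<Rightarrow> 'a set \<Rightarrow> nat" where
  "mrank \<I> X = Max {card Y | Y. Y \<subseteq> X \<and> Y \<in> \<I>}"

definition mclosure :: "'a set \<Rightarrow> 'a set set \<Rightarrow> 'a set \<Rightarrow> 'a set" where
  "mclosure E \<I> X = {a\<in>E. mrank \<I> (X \<union> {a}) = mrank \<I> X}"

definition is_matroid_closure :: "'a set \<Rightarrow> ('a set \<Rightarrow> 'a set) \<Rightarrow> bool" where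
  "is_matroid_closure E H \<longleftrightarrow>
     (\<exists>\<I>. matroid E \<I> \<and> (\<forall>X. X \<subseteq> E \<longrightarrow> H X = mclosure E \<I> X))"

definition indep_H :: "'a set \<Rightarrow> ('a set \<Rightarrow> 'a set) \<Rightarrow> 'a set set" where
  "indep_H E H = {I. I \<subseteq> E \<and> (\<forall>x\<in>I. x \<notin> H (I - {x}))}"

definition closed_H :: "'a set \<Rightarrow> ('a set \<Rightarrow> 'a set) \<Rightarrow> 'a set set" where
  "closed_H E H = {X. X \<subseteq> E \<and> H X = X}"

end

theory Submission
  imports Defs
begin

lemma mrank_empty: "{} \<in> I \<Longrightarrow> mrank I {} = 0"
proof -
  assume "{} \<in> I"
  hence "{card Y | Y. Y \<subseteq> {} \<and> Y \<in> I} = {0}" by auto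
  thus ?thesis unfolding mrank_def by simp
qed

lemma mrank_single: "{} \<in> I \<Longrightarrow> mrank I {z} \<le> 1"
proof -
  assume e: "{} \<in> I"
  let ?S = "{card Y | Y. Y \<subseteq> {z} \<and> Y \<in> I}"
  have fin: "finite ?S"
    by (rule finite_subset[of _ "card ` Pow {z}"]) auto
  have ne: "?S \<noteq> {}" using e by blast
  have b: "n \<le> 1" if "n \<in> ?S" for n
  proof -
    from that obtain Y where Y: "Y \<subseteq> {z}" "n = card Y" by blast
    have "card Y \<le> card {z}" by (rule card_mono) (simp_all add: Y)
    thus "n \<le> 1" using Y by simp
  qed
  show ?thesis unfolding mrank_def using Max.boundedI[OF fin ne b] .
qed

lemma nbhd_self: "covering E C \<Longrightarrow> x \<in> E \<Longrightarrow> x \<in> nbhd C x \<and> nbhd C x \<subseteq> E"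
  unfolding covering_def nbhd_def by auto

lemma nbhd_mono: "y \<in> nbhd C x \<Longrightarrow> nbhd C y \<subseteq> nbhd C x"
  unfolding nbhd_def by blast

theorem proposition28:
  fixes E :: "'a set" and C :: "'a set set"
  assumes "finite E" and "covering E C"
    and "is_matroid_closure E (XH E C)"
  shows "is_matroid_closure E (VH E C)
    \<and> indep_H E (XH E C) = indep_H E (VH E C)
    \<and> closed_H E (XH E C) = closed_H E (VH E C)"
proof -
  obtain I where m: "matroid E I" and cl: "\<And>X. X \<subseteq> E \<Longrightarrow> XH E C X = mclosure E I X"
    using assms(3) unfolding is_matroid_closure_def by blast
  have e: "{} \<in> I" using m unfolding matroid_def by blast
  have r1: "mrank I {z} = 1" if z: "z \<in> E" for z
  proof -
    have "XH E C {} = {}" unfolding XH_def by auto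
    hence "z \<notin> mclosure E I {}" using cl[of "{}"] by auto
    hence "mrank I {z} \<noteq> 0" using z mrank_empty[OF e] unfolding mclosure_def by auto
    thus ?thesis using mrank_single[OF e, of z] by linarith
  qed
  have sym: "x \<in> nbhd C y" if x: "x \<in> E" and y: "y \<in> E" and yx: "y \<in> nbhd C x" for x y
  proof -
    have "x \<in> XH E C {y}" using x yx unfolding XH_def by auto
    hence "x \<in> mclosure E I {y}" using cl[of "{y}"] y by auto
    hence "mrank I ({y} \<union> {x}) = mrank I {y}" unfolding mclosure_def by auto
    hence "mrank I ({x} \<union> {y}) = mrank I {x}" using r1 x y by (simp add: Un_commute)
    hence "y \<in> mclosure E I {x}" using y unfolding mclosure_def by auto
    hence "y \<in> XH E C {x}" using cl[of "{x}"] x by auto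
    thus ?thesis unfolding XH_def by auto
  qed
  have eqN: "nbhd C y = nbhd C x" if x: "x \<in> E" and yx: "y \<in> nbhd C x" for x y
  proof -
    have y: "y \<in> E" using nbhd_self[OF assms(2) x] yx by auto
    show ?thesis using nbhd_mono[OF yx] nbhd_mono[OF sym[OF x y yx]] by (rule equalityI)
  qed
  have VX: "VH E C = XH E C"
  proof
    fix X
    show "VH E C X = XH E C X"
    proof
      show "VH E C X \<subseteq> XH E C X"
      proof
        fix y assume "y \<in> VH E C X"
        then obtain x where x: "x \<in> E" "nbhd C x \<inter> X \<noteq> {}" "y \<in> nbhd C x"
          unfolding VH_def by blast
        have "y \<in> E" using nbhd_self[OF assms(2) x(1)] x(3) by blast
        thus "y \<in> XH E C X" using eqN[OF x(1) x(3)] x(2) unfolding XH_def by auto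
      qed
    next
      show "XH E C X \<subseteq> VH E C X"
      proof
        fix y assume "y \<in> XH E C X"
        hence "y \<in> E" "nbhd C y \<inter> X \<noteq> {}" unfolding XH_def by auto
        thus "y \<in> VH E C X" unfolding VH_def using nbhd_self[OF assms(2)] by blast
      qed
    qed
  qed
  show ?thesis using assms(3) unfolding VX by simp
qed

end
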